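(* Let $X_1,X_2,\dots$ be a sequence of non-negative random variables converging in distribution to a random variable $X$ with $\mathbf{E} X=\infty$. For each $n$, let $X_{n,1},\dots,X_{n,n}$ be iid copies of $X_n$. Then there is a positive nonrandom sequence $\{\phi_n\}$ with $\phi_n\to+\infty$ such that $$\mathbf{P}\bigl(X_{n,1}+\cdots+X_{n,n}>\phi_n n\bigr)=1-o(1)\quad\text{as } n\to\infty.$$ *)

theory Defs
  imports "HOL-Probability.Probability"
begin

end

theory Submission
  imports Defs "HOL-Real_Asymp.Real_Asymp"
begin

definition clip :: "real \<Rightarrow> real \<Rightarrow> real" where "clip M x = max 0 (min x M)"

lemma clip_cont: "isCont (clip M) x"
  unfolding clip_def by (intro continuous_intros)
lemma clip_meas[measurable]: "clip M \<in> borel_measurable borel"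
  unfolding clip_def by measurable
lemma clip_bound: "0 \<le> M \<Longrightarrow> norm (clip M x) \<le> M"
  unfolding clip_def by auto

lemma lemA:
  fixes Q :: "'b measure" and Y :: "'b \<Rightarrow> real"
  assumes Q: "prob_space Q" and Ym[measurable]: "Y \<in> borel_measurable Q"
    and EY: "(\<integral>\<^sup>+ \<omega>. ennreal (Y \<omega>) \<partial>Q) = \<infinity>"
  shows "\<exists>M>0. c < (\<integral>x. clip M x \<partial>distr Q borel Y)"
proof -
  interpret prob_space Q by fact
  have lim: "(SUP k::nat. ennreal (clip (real k) y)) = ennreal y" for y
  proof -
    have inc: "incseq (\<lambda>k::nat. ennreal (clip (real k) y))"
      by (auto simp: incseq_def clip_def intro!: ennreal_leI)
    have ev: "eventually (\<lambda>k::nat. ennreal (clip (real k) y) = ennreal y) sequentially"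
    proof -
      obtain N :: nat where "y \<le> real N" using real_arch_simple by blast
      then show ?thesis
        by (auto simp: eventually_sequentially clip_def intro!: exI[of _ N])
    qed
    have "(\<lambda>k::nat. ennreal (clip (real k) y)) \<longlonglongrightarrow> ennreal y"
      by (rule tendsto_eventually[OF ev])
    with LIMSEQ_SUP[OF inc] show ?thesis using LIMSEQ_unique by blast
  qed
  have "(SUP k::nat. \<integral>\<^sup>+ \<omega>. ennreal (clip (real k) (Y \<omega>)) \<partial>Q) = (\<integral>\<^sup>+ \<omega>. (SUP k::nat. ennreal (clip (real k) (Y \<omega>))) \<partial>Q)"
    by (rule nn_integral_monotone_convergence_SUP[symmetric])
       (auto simp: incseq_def le_fun_def clip_def intro!: ennreal_leI)
  also have "\<dots> = \<infinity>" using lim EY by simp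
  finally have sup: "(SUP k::nat. \<integral>\<^sup>+ \<omega>. ennreal (clip (real k) (Y \<omega>)) \<partial>Q) = \<infinity>" .
  have int: "integrable Q (\<lambda>\<omega>. clip M (Y \<omega>))" if "M \<ge> 0" for M
    by (rule integrable_const_bound[where B=M]) (use clip_bound[OF that] in auto)
  have eqd: "(\<integral>x. clip M x \<partial>distr Q borel Y) = (\<integral>\<omega>. clip M (Y \<omega>) \<partial>Q)" for M
    by (rule integral_distr) auto
  have nn: "0 \<le> (\<integral>\<omega>. clip M (Y \<omega>) \<partial>Q)" for M
    by (rule integral_nonneg_AE) (auto simp: clip_def)
  show ?thesis
  proof (cases "c < 0")
    case True then show ?thesis using nn[of 1] eqd[of 1] by (intro exI[of _ 1]) auto
  next
    case False
    have "ennreal c < \<infinity>" by simp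
    then obtain k :: nat where k: "ennreal c < \<integral>\<^sup>+ \<omega>. ennreal (clip (real k) (Y \<omega>)) \<partial>Q"
      unfolding sup[symmetric] less_SUP_iff by blast
    also have "\<dots> = ennreal (\<integral>\<omega>. clip (real k) (Y \<omega>) \<partial>Q)"
      by (rule nn_integral_eq_integral[OF int]) (auto simp: clip_def)
    finally have lt: "c < (\<integral>\<omega>. clip (real k) (Y \<omega>) \<partial>Q)"
      using False by (simp add: ennreal_less_iff nn)
    have "k \<noteq> 0"
    proof
      assume "k = 0"
      then have "(\<integral>\<omega>. clip (real k) (Y \<omega>) \<partial>Q) = 0" by (simp add: clip_def)
      with lt False show False by simp
    qed
    then show ?thesis using lt eqd by (intro exI[of _ "real k"]) auto
  qed
qed
lemma bound_n:
  fixes \<Omega> :: "'c measure" and Zs :: "nat \<Rightarrow> 'c \<Rightarrow> real" and D :: "real measure"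
  assumes \<Omega>: "prob_space \<Omega>"
    and indep: "prob_space.indep_vars \<Omega> (\<lambda>_. borel) Zs {..<n}"
    and ident: "\<And>i. i < n \<Longrightarrow> distr \<Omega> borel (Zs i) = D"
    and nonneg: "AE x in D. 0 \<le> x"
    and a: "(\<integral>x. clip M x \<partial>D) = a"
    and n: "n \<ge> 1" and M: "M > 0" and ac: "a \<ge> c + \<delta>" and \<delta>: "\<delta> \<ge> 0"
  shows "measure \<Omega> {\<omega> \<in> space \<Omega>. (\<Sum>i<n. Zs i \<omega>) \<le> c * real n} \<le> exp (-2 * real n * \<delta>^2 / M^2)"
proof -
  interpret prob_space \<Omega> by fact
  have rv[measurable]: "Zs i \<in> borel_measurable \<Omega>" if "i < n" for i
    using indep that unfolding indep_vars_def by auto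
  define W where "W = (\<lambda>i \<omega>. clip M (Zs i \<omega>))"
  have expW: "expectation (W i) = a" if "i < n" for i
  proof -
    have "expectation (W i) = (\<integral>x. clip M x \<partial>distr \<Omega> borel (Zs i))"
      unfolding W_def using that by (intro integral_distr[symmetric]) auto
    then show ?thesis using ident[OF that] a by simp
  qed
  interpret H: Hoeffding_ineq \<Omega> "{..<n}" W "\<lambda>_. 0" "\<lambda>_. M" "real n * a"
  proof unfold_locales
    show "indep_vars (\<lambda>_. borel) W {..<n}"
      unfolding W_def by (rule indep_vars_compose2[OF indep]) auto
    show "AE x in \<Omega>. W i x \<in> {0..M}" for i
      using M by (auto simp: W_def clip_def)
    show "real n * a \<equiv> \<Sum>i<n. expectation (W i)"
      using expW by simp
  qed auto
  define \<epsilon> where "\<epsilon> = real n * (a - c)"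
  have \<epsilon>: "\<epsilon> \<ge> real n * \<delta>" "\<epsilon> \<ge> 0" using ac \<delta> by (auto simp: \<epsilon>_def intro!: mult_left_mono)
  have pos: "(\<Sum>i<n. (M - 0)\<^sup>2) > 0" using n M by simp
  have H1: "prob {x\<in>space \<Omega>. (\<Sum>i<n. W i x) \<le> real n * a - \<epsilon>} \<le> exp (-2 * \<epsilon>\<^sup>2 / (\<Sum>i<n. (M - 0)\<^sup>2))"
    using H.Hoeffding_ineq_le[OF \<epsilon>(2) pos] by simp
  have set_eq: "{x\<in>space \<Omega>. (\<Sum>i<n. W i x) \<le> real n * a - \<epsilon>} = {x\<in>space \<Omega>. (\<Sum>i<n. W i x) \<le> c * real n}"
    by (auto simp: \<epsilon>_def algebra_simps)
  have AEnn: "AE \<omega> in \<Omega>. \<forall>i\<in>{..<n}. 0 \<le> Zs i \<omega>"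
  proof (rule AE_finite_allI)
    fix i assume i: "i \<in> {..<n}"
    have e: "distr \<Omega> borel (Zs i) = D" using i ident by auto
    have "AE x in distr \<Omega> borel (Zs i). 0 \<le> x" unfolding e by (rule nonneg)
    then show "AE \<omega> in \<Omega>. 0 \<le> Zs i \<omega>" using i by (subst (asm) AE_distr_iff) auto
  qed simp
  have "measure \<Omega> {\<omega> \<in> space \<Omega>. (\<Sum>i<n. Zs i \<omega>) \<le> c * real n} \<le> measure \<Omega> {x\<in>space \<Omega>. (\<Sum>i<n. W i x) \<le> c * real n}"
  proof (rule finite_measure_mono_AE)
    show "AE x in \<Omega>. x \<in> {\<omega> \<in> space \<Omega>. (\<Sum>i<n. Zs i \<omega>) \<le> c * real n} \<longrightarrow> x \<in> {x\<in>space \<Omega>. (\<Sum>i<n. W i x) \<le> c * real n}"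
      using AEnn
    proof eventually_elim
      case (elim \<omega>)
      have "(\<Sum>i<n. W i \<omega>) \<le> (\<Sum>i<n. Zs i \<omega>)"
        using elim M by (intro sum_mono) (auto simp: W_def clip_def)
      then show ?case by auto
    qed
    show "{x\<in>space \<Omega>. (\<Sum>i<n. W i x) \<le> c * real n} \<in> sets \<Omega>"
      unfolding W_def by measurable
  qed
  also have "\<dots> \<le> exp (-2 * \<epsilon>\<^sup>2 / (\<Sum>i<n. (M - 0)\<^sup>2))" using H1 set_eq by simp
  also have "\<dots> \<le> exp (-2 * real n * \<delta>^2 / M^2)"
  proof -
    have "(real n * \<delta>)^2 \<le> \<epsilon>^2" using \<epsilon> \<delta> by (intro power_mono) auto
    then have "2 * (real n * \<delta>)^2 / (real n * M^2) \<le> 2 * \<epsilon>^2 / (real n * M^2)"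
      using n M by (intro divide_right_mono) auto
    moreover have "2 * (real n * \<delta>)^2 / (real n * M^2) = 2 * real n * \<delta>^2 / M^2"
      using n by (simp add: power2_eq_square field_simps)
    ultimately show ?thesis by simp
  qed
  finally show ?thesis .
qed
lemma diag:
  fixes p :: "real \<Rightarrow> nat \<Rightarrow> real"
  assumes lim: "\<And>c. p c \<longlonglongrightarrow> 1" and le1: "\<And>c n. p c n \<le> 1"
  shows "\<exists>\<phi>. (\<forall>n. \<phi> n > 0) \<and> filterlim \<phi> at_top sequentially \<and> (\<lambda>n. p (\<phi> n) n) \<longlonglongrightarrow> 1"
proof -
  have "\<forall>k::nat. \<exists>N. \<forall>n\<ge>N. p (real k + 1) n > 1 - 1 / (real k + 1)"
  proof
    fix k :: nat
    have "1 / (real k + 1) > 0" by simp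
    from lim[of "real k + 1", unfolded LIMSEQ_iff, rule_format, OF this]
    obtain N where "\<forall>n\<ge>N. norm (p (real k + 1) n - 1) < 1 / (real k + 1)" by blast
    then show "\<exists>N. \<forall>n\<ge>N. p (real k + 1) n > 1 - 1 / (real k + 1)"
      by (intro exI[of _ N]) (auto simp: abs_less_iff)
  qed
  then obtain N where N: "\<And>k n. n \<ge> N k \<Longrightarrow> p (real k + 1) n > 1 - 1 / (real k + 1)"
    by metis
  define S where "S n = {k. k \<le> n \<and> (\<forall>j\<le>k. N j \<le> n)}" for n
  define g where "g n = Max (insert 0 (S n))" for n
  have finS: "finite (insert 0 (S n))" for n
    by (rule finite_subset[of _ "{..n}"]) (auto simp: S_def)
  have key: "K \<le> g n \<and> g n \<in> S n" if "n \<ge> K" "n \<ge> Max (N ` {..K})" for K n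
  proof -
    have "\<forall>j\<le>K. N j \<le> n" using that(2) by (meson Max_ge atMost_iff finite_atMost finite_imageI image_eqI order.trans)
    then have K: "K \<in> S n" using that(1) by (auto simp: S_def)
    then have "K \<le> g n" unfolding g_def using finS by auto
    moreover have "g n \<in> S n"
    proof -
      have "g n \<in> insert 0 (S n)" unfolding g_def using finS by (intro Max_in) auto
      then show ?thesis using K \<open>K \<le> g n\<close> by auto
    qed
    ultimately show ?thesis by blast
  qed
  define \<phi> where "\<phi> n = real (g n) + 1" for n
  have gS: "p (\<phi> n) n > 1 - 1 / \<phi> n" if "g n \<in> S n" for n
    using that N[of "g n" n] unfolding S_def \<phi>_def by auto
  show ?thesis
  proof (intro exI[of _ \<phi>] conjI allI)
    show "\<phi> n > 0" for n by (simp add: \<phi>_def)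
    show "filterlim \<phi> at_top sequentially"
    proof (subst filterlim_at_top, intro allI)
      fix Z :: real
      define K where "K = nat \<lceil>Z\<rceil>"
      have "\<forall>n\<ge>max K (Max (N ` {..K})). Z \<le> \<phi> n"
      proof (intro allI impI)
        fix n assume "max K (Max (N ` {..K})) \<le> n"
        then have "K \<le> g n" using key[of K n] by auto
        then have "real K \<le> real (g n)" by simp
        moreover have "Z \<le> real K" unfolding K_def by linarith
        ultimately show "Z \<le> \<phi> n" by (simp add: \<phi>_def)
      qed
      then show "eventually (\<lambda>n. Z \<le> \<phi> n) sequentially"
        unfolding eventually_sequentially by blast
    qed
    show "(\<lambda>n. p (\<phi> n) n) \<longlonglongrightarrow> 1"
    proof (rule LIMSEQ_I)
      fix r :: real assume r: "r > 0"
      obtain K :: nat where K: "1 / (real K + 1) < r"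
        using r by (metis nat_approx_posE of_nat_Suc add.commute)
      have "norm (p (\<phi> n) n - 1) < r" if "n \<ge> max K (Max (N ` {..K}))" for n
      proof -
        have kk: "K \<le> g n" "g n \<in> S n" using key[of K n] that by auto
        have "1 / \<phi> n \<le> 1 / (real K + 1)"
          using kk(1) by (intro divide_left_mono) (auto simp: \<phi>_def)
        then show ?thesis using gS[OF kk(2)] le1[of "\<phi> n" n] K by auto
      qed
      then show "\<exists>no. \<forall>n\<ge>no. norm (p (\<phi> n) n - 1) < r" by blast
    qed
  qed
qed
lemma lemB:
  fixes P :: "nat \<Rightarrow> 'a measure" and X :: "nat \<Rightarrow> 'a \<Rightarrow> real"
    and Q :: "'b measure" and Y :: "'b \<Rightarrow> real"
    and \<Omega> :: "nat \<Rightarrow> 'c measure" and Z :: "nat \<Rightarrow> nat \<Rightarrow> 'c \<Rightarrow> real"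
  assumes P: "\<And>n. prob_space (P n)"
    and X_meas: "\<And>n. X n \<in> borel_measurable (P n)"
    and X_nonneg: "\<And>n. \<forall>\<omega>\<in>space (P n). X n \<omega> \<ge> 0"
    and Q: "prob_space Q"
    and Y_meas: "Y \<in> borel_measurable Q"
    and conv: "weak_conv_m (\<lambda>n. distr (P n) borel (X n)) (distr Q borel Y)"
    and EY: "(\<integral>\<^sup>+ \<omega>. ennreal (Y \<omega>) \<partial>Q) = \<infinity>"
    and \<Omega>: "\<And>n. prob_space (\<Omega> n)"
    and indep: "\<And>n. prob_space.indep_vars (\<Omega> n) (\<lambda>_. borel) (Z n) {..<n}"
    and ident: "\<And>n i. i < n \<Longrightarrow> distr (\<Omega> n) borel (Z n i) = distr (P n) borel (X n)"
  shows "(\<lambda>n. measure (\<Omega> n) {\<omega> \<in> space (\<Omega> n). (\<Sum>i<n. Z n i \<omega>) > c * real n}) \<longlonglongrightarrow> 1"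
proof -
  obtain M where M: "M > 0" and cm: "c < (\<integral>x. clip M x \<partial>distr Q borel Y)"
    using lemA[OF Q Y_meas EY] by blast
  define m where "m = (\<integral>x. clip M x \<partial>distr Q borel Y)"
  define a where "a n = (\<integral>x. clip M x \<partial>distr (P n) borel (X n))" for n
  have rd: "real_distribution (distr (P n) borel (X n))" for n
    using prob_space.real_distribution_distr[OF P X_meas] by simp
  have rdQ: "real_distribution (distr Q borel Y)"
    using prob_space.real_distribution_distr[OF Q Y_meas] by simp
  have alim: "a \<longlonglongrightarrow> m"
    unfolding a_def m_def
    by (rule weak_conv_imp_integral_bdd_continuous_conv[OF rd rdQ conv clip_cont clip_bound])
       (use M in simp)
  define \<delta> where "\<delta> = (m - c) / 2"
  have \<delta>: "\<delta> > 0" using cm by (simp add: \<delta>_def m_def)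
  have ev1: "eventually (\<lambda>n. a n > c + \<delta>) sequentially"
  proof -
    have cm': "c < m" using cm by (simp add: m_def)
    have "c + \<delta> < m" using cm' unfolding \<delta>_def by (simp add: field_simps)
    then show ?thesis using order_tendstoD(1)[OF alim] by blast
  qed
  define e where "e n = exp (-2 * real n * \<delta>^2 / M^2)" for n
  have elim: "e \<longlonglongrightarrow> 0"
    unfolding e_def using \<delta> M by real_asymp
  define p where "p n = measure (\<Omega> n) {\<omega> \<in> space (\<Omega> n). (\<Sum>i<n. Z n i \<omega>) > c * real n}" for n
  have pbounds: "1 - e n \<le> p n \<and> p n \<le> 1" if n1: "n \<ge> 1" and an: "a n > c + \<delta>" for n
  proof -
    interpret prob_space "\<Omega> n" by (rule \<Omega>)
    have rv[measurable]: "Z n i \<in> borel_measurable (\<Omega> n)" if "i < n" for i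
      using indep[of n] that unfolding indep_vars_def by auto
    have nn: "AE x in distr (P n) borel (X n). 0 \<le> x"
      using X_nonneg[of n] X_meas[of n] by (subst AE_distr_iff) auto
    have b: "measure (\<Omega> n) {\<omega> \<in> space (\<Omega> n). (\<Sum>i<n. Z n i \<omega>) \<le> c * real n} \<le> e n"
      unfolding e_def
      by (rule bound_n[OF \<Omega> indep ident nn a_def[symmetric] n1 M]) (use an \<delta> in auto)
    have A: "{\<omega> \<in> space (\<Omega> n). (\<Sum>i<n. Z n i \<omega>) \<le> c * real n} \<in> events" by measurable
    have "p n = prob (space (\<Omega> n) - {\<omega> \<in> space (\<Omega> n). (\<Sum>i<n. Z n i \<omega>) \<le> c * real n})"
      unfolding p_def by (intro arg_cong[where f="prob"]) auto
    also have "\<dots> = 1 - prob {\<omega> \<in> space (\<Omega> n). (\<Sum>i<n. Z n i \<omega>) \<le> c * real n}"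
      by (rule prob_compl[OF A])
    finally show ?thesis using b unfolding p_def by simp
  qed
  have ev: "eventually (\<lambda>n. 1 - e n \<le> p n \<and> p n \<le> 1) sequentially"
    using ev1 eventually_ge_at_top[of "1::nat"] by eventually_elim (use pbounds in auto)
  have "p \<longlonglongrightarrow> 1"
  proof (rule tendsto_sandwich[of "\<lambda>n. 1 - e n" p sequentially "\<lambda>_. 1"])
    show "eventually (\<lambda>n. 1 - e n \<le> p n) sequentially" using ev by (rule eventually_mono) auto
    show "eventually (\<lambda>n. p n \<le> 1) sequentially" using ev by (rule eventually_mono) auto
    show "(\<lambda>n. 1 - e n) \<longlonglongrightarrow> 1" using tendsto_diff[OF tendsto_const elim, of 1] by simp
  qed simp
  then show ?thesis unfolding p_def .
qed

theorem lemma1: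
  fixes P :: "nat \<Rightarrow> 'a measure" and X :: "nat \<Rightarrow> 'a \<Rightarrow> real"
    and Q :: "'b measure" and Y :: "'b \<Rightarrow> real"
    and \<Omega> :: "nat \<Rightarrow> 'c measure" and Z :: "nat \<Rightarrow> nat \<Rightarrow> 'c \<Rightarrow> real"
  assumes P: "\<And>n. prob_space (P n)"
    and X_meas: "\<And>n. X n \<in> borel_measurable (P n)"
    and X_nonneg: "\<And>n. \<forall>\<omega>\<in>space (P n). X n \<omega> \<ge> 0"
    and Q: "prob_space Q"
    and Y_meas: "Y \<in> borel_measurable Q"
    and conv: "weak_conv_m (\<lambda>n. distr (P n) borel (X n)) (distr Q borel Y)"
    and EY: "(\<integral>\<^sup>+ \<omega>. ennreal (Y \<omega>) \<partial>Q) = \<infinity>"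
    and \<Omega>: "\<And>n. prob_space (\<Omega> n)"
    and indep: "\<And>n. prob_space.indep_vars (\<Omega> n) (\<lambda>_. borel) (Z n) {..<n}"
    and ident: "\<And>n i. i < n \<Longrightarrow> distr (\<Omega> n) borel (Z n i) = distr (P n) borel (X n)"
  shows "\<exists>\<phi> :: nat \<Rightarrow> real. (\<forall>n. \<phi> n > 0) \<and> filterlim \<phi> at_top sequentially \<and>
     (\<lambda>n. measure (\<Omega> n) {\<omega> \<in> space (\<Omega> n). (\<Sum>i<n. Z n i \<omega>) > \<phi> n * real n})
       \<longlonglongrightarrow> 1"
proof -
  let ?p = "\<lambda>c n. measure (\<Omega> n) {\<omega> \<in> space (\<Omega> n). (\<Sum>i<n. Z n i \<omega>) > c * real n}"
  have "\<exists>\<phi>. (\<forall>n. \<phi> n > 0) \<and> filterlim \<phi> at_top sequentially \<and> (\<lambda>n. ?p (\<phi> n) n) \<longlonglongrightarrow> 1"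
  proof (rule diag)
    show "?p c \<longlonglongrightarrow> 1" for c
      by (rule lemB[OF assms])
    show "?p c n \<le> 1" for c n
      using prob_space.prob_le_1[OF \<Omega>] by simp
  qed
  then show ?thesis by simp
qed

end
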